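(* Let $n\ge 3$ and let $F$ be a minimal set of faulty edges of $Q_n$. Let $T$ be a set disconnected halfway with respect to $F$ such that no proper subset of $T$ is disconnected halfway with respect to $F$. Then: (1) if $|T|=4$, then $T$ is the vertex set of a 2-dimensional subcube (a 4-cycle of $Q_n$); (2) if $|T|=6$, then the subgraph of $Q_n$ induced by $T$ contains a cycle of length 6; (3) if $|T|=8$, then either the subgraph induced by $T$ contains a cycle of length 8, or $Q_n-F$ contains a CL trap.
   Context: $Q_n$ is the $n$-dimensional hypercube on the binary strings of length $n$, two strings adjacent iff they differ in exactly one bit; a $k$-dimensional subcube is the set of vertices obtained by fixing $n-k$ coordinates. The parity of a vertex is the number of ones in its label modulo 2; $|T|_0,|T|_1$ denote the numbers of parity-0 and parity-1 vertices of $T$. $F$ is a set of "faulty" edges and $Q_n-F$ is the graph on all vertices of $Q_n$ with the edges of $Q_n$ not in $F$ (the "healthy" edges). $F$ is minimal if $Q_n-F$ has no Hamiltonian cycle but $Q_n-F'$ has one for every proper subset $F'\subsetneq F$. A nonempty proper subset $T$ of the vertices is disconnected halfway (with respect to $F$) if either (1) $|T|_0\ge |T|_1$ and every edge joining a vertex of parity 0 in $T$ to a vertex outside $T$ is in $F$, or (2) $|T|_1\ge |T|_0$ and every edge joining a vertex of parity 1 in $T$ to a vertex outside $T$ is in $F$. A CL trap in $Q_n-F$ is a vertex $u$ together with three neighbours $v,w,x$ such that the edges $(u,v),(u,w),(u,x)$ are healthy and each of $v,w,x$ has degree exactly 2 in $Q_n-F$. *)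

theory Defs
  imports Main
begin

definition qverts :: "nat \<Rightarrow> bool list set" where
  "qverts n = {xs. length xs = n}"

definition qadj :: "bool list \<Rightarrow> bool list \<Rightarrow> bool" where
  "qadj u v \<longleftrightarrow> length u = length v \<and> card {i. i < length u \<and> u ! i \<noteq> v ! i} = 1"

definition qedges :: "nat \<Rightarrow> bool list set set" where
  "qedges n = {{u, v} | u v. u \<in> qverts n \<and> v \<in> qverts n \<and> qadj u v}"

definition parity :: "bool list \<Rightarrow> nat" where
  "parity xs = length (filter id xs) mod 2"

definition parcount :: "bool list set \<Rightarrow> nat \<Rightarrow> nat" where
  "parcount T p = card {x \<in> T. parity x = p}"

definition ham_cycle :: "'a set \<Rightarrow> 'a set set \<Rightarrow> 'a list \<Rightarrow> bool" where
  "ham_cycle V E cs \<longleftrightarrow> distinct cs \<and> set cs = V \<and> length cs \<ge> 3 \<and>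
     (\<forall>i < length cs. {cs ! i, cs ! ((i + 1) mod length cs)} \<in> E)"

definition has_ham_cycle :: "'a set \<Rightarrow> 'a set set \<Rightarrow> bool" where
  "has_ham_cycle V E \<longleftrightarrow> (\<exists>cs. ham_cycle V E cs)"

definition minimal_faulty :: "nat \<Rightarrow> bool list set set \<Rightarrow> bool" where
  "minimal_faulty n F \<longleftrightarrow> F \<subseteq> qedges n \<and>
     \<not> has_ham_cycle (qverts n) (qedges n - F) \<and>
     (\<forall>F'. F' \<subset> F \<longrightarrow> has_ham_cycle (qverts n) (qedges n - F'))"

definition disc_halfway :: "nat \<Rightarrow> bool list set set \<Rightarrow> bool list set \<Rightarrow> bool" where
  "disc_halfway n F T \<longleftrightarrow> T \<noteq> {} \<and> T \<subset> qverts n \<and>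
     ((parcount T 0 \<ge> parcount T 1 \<and>
        (\<forall>u \<in> T. \<forall>v. parity u = 0 \<and> v \<notin> T \<and> {u, v} \<in> qedges n \<longrightarrow> {u, v} \<in> F)) \<or>
      (parcount T 1 \<ge> parcount T 0 \<and>
        (\<forall>u \<in> T. \<forall>v. parity u = 1 \<and> v \<notin> T \<and> {u, v} \<in> qedges n \<longrightarrow> {u, v} \<in> F)))"

definition is_subcube :: "nat \<Rightarrow> nat \<Rightarrow> bool list set \<Rightarrow> bool" where
  "is_subcube n k S \<longleftrightarrow> (\<exists>I a. I \<subseteq> {0..<n} \<and> card I = n - k \<and> k \<le> n \<and> a \<in> qverts n \<and>
      S = {x \<in> qverts n. \<forall>i \<in> I. x ! i = a ! i})"

definition has_cycle_in :: "bool list set \<Rightarrow> nat \<Rightarrow> bool" where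
  "has_cycle_in T k \<longleftrightarrow> (\<exists>cs. distinct cs \<and> length cs = k \<and> set cs \<subseteq> T \<and>
      (\<forall>i < k. qadj (cs ! i) (cs ! ((i + 1) mod k))))"

definition hdeg :: "nat \<Rightarrow> bool list set set \<Rightarrow> bool list \<Rightarrow> nat" where
  "hdeg n F v = card {y \<in> qverts n. {v, y} \<in> qedges n - F}"

definition has_CL_trap :: "nat \<Rightarrow> bool list set set \<Rightarrow> bool" where
  "has_CL_trap n F \<longleftrightarrow> (\<exists>u v w x. u \<in> qverts n \<and> v \<noteq> w \<and> v \<noteq> x \<and> w \<noteq> x \<and>
      {u, v} \<in> qedges n - F \<and> {u, w} \<in> qedges n - F \<and> {u, x} \<in> qedges n - F \<and>
      hdeg n F v = 2 \<and> hdeg n F w = 2 \<and> hdeg n F x = 2)"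

end

theory Submission
  imports Defs
begin


definition flip :: "bool list \<Rightarrow> nat \<Rightarrow> bool list" where
  "flip u i = u[i := \<not> u ! i]"

lemma qadj_flip:
  assumes "qadj u v"
  obtains i where "i < length u" "v = flip u i"
proof -
  from assms have len: "length u = length v" and c: "card {i. i < length u \<and> u!i \<noteq> v!i} = 1"
    by (auto simp: qadj_def)
  from c obtain i where D: "{i. i < length u \<and> u!i \<noteq> v!i} = {i}" by (rule card_1_singletonE)
  then have i: "i < length u" "u!i \<noteq> v!i" by auto
  have "v = flip u i"
  proof (rule nth_equalityI)
    show "length v = length (flip u i)" using len by (simp add: flip_def)
    fix j assume j: "j < length v"
    show "v ! j = flip u i ! j"
    proof (cases "j = i")
      case True then show ?thesis using i by (auto simp: flip_def)
    next
      case False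
      have "\<not> (j < length u \<and> u!j \<noteq> v!j)"
      proof
        assume "j < length u \<and> u!j \<noteq> v!j"
        then have "j \<in> {i. i < length u \<and> u!i \<noteq> v!i}" by simp
        then have "j \<in> {i}" by (simp only: D)
        then have "j = i" by simp
        then show False using False by simp
      qed
      then have "u!j = v!j" using j len by simp
      then show ?thesis using False by (simp add: flip_def)
    qed
  qed
  with i that show ?thesis by blast
qed

lemma qadj_sym: "qadj u v \<Longrightarrow> qadj v u"
proof -
  assume a: "qadj u v"
  then have len: "length u = length v" by (simp add: qadj_def)
  have "{i. i < length v \<and> v!i \<noteq> u!i} = {i. i < length u \<and> u!i \<noteq> v!i}"
    using len by (metis (mono_tags, lifting))
  then show ?thesis using a len unfolding qadj_def by simp
qed

lemma qadj_irrefl: "\<not> qadj u u"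
  by (simp add: qadj_def)

lemma count_upd:
  "i < length xs \<Longrightarrow> length (filter id (xs[i:=b])) + (if xs!i then 1 else 0) = length (filter id xs) + (if b then 1 else 0)"
proof (induction xs arbitrary: i)
  case Nil then show ?case by simp
next
  case (Cons x xs)
  show ?case
  proof (cases i)
    case 0 then show ?thesis by simp
  next
    case (Suc m) then show ?thesis using Cons.IH[of m] Cons.prems by (cases x; cases b; cases "xs!m") simp_all
  qed
qed

lemma mod2_succ: "(a::nat) = b + 1 \<or> b = a + 1 \<Longrightarrow> a mod 2 \<noteq> b mod 2"
  by (auto simp: mod_Suc split: if_split_asm)

lemma qadj_parity: "qadj u v \<Longrightarrow> parity u \<noteq> parity v"
proof -
  assume "qadj u v"
  then obtain i where i: "i < length u" "v = flip u i" by (rule qadj_flip)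
  have "length (filter id v) + (if u!i then 1 else 0) = length (filter id u) + (if \<not> u!i then 1 else 0)"
    using count_upd[OF i(1), of "\<not> u!i"] i(2) by (simp add: flip_def)
  then have "length (filter id u) = length (filter id v) + 1 \<or> length (filter id v) = length (filter id u) + 1"
    by (cases "u!i") auto
  then show ?thesis unfolding parity_def by (rule mod2_succ)
qed

lemma parity_lt: "parity x < 2" by (simp add: parity_def)

lemma qedges_iff: "{u,v} \<in> qedges n \<longleftrightarrow> u \<in> qverts n \<and> v \<in> qverts n \<and> qadj u v"
proof
  assume "{u,v} \<in> qedges n"
  then obtain a b where h: "{u,v} = {a,b}" "a \<in> qverts n" "b \<in> qverts n" "qadj a b"
    by (auto simp: qedges_def)
  from h(1) have "(u=a \<and> v=b) \<or> (u=b \<and> v=a)" by (simp add: doubleton_eq_iff)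
  then show "u \<in> qverts n \<and> v \<in> qverts n \<and> qadj u v" using h(2-4) qadj_sym by metis
next
  assume "u \<in> qverts n \<and> v \<in> qverts n \<and> qadj u v"
  then show "{u,v} \<in> qedges n" by (auto simp: qedges_def)
qed

lemma finite_qverts: "finite (qverts n)"
proof -
  have "qverts n = {xs. set xs \<subseteq> (UNIV::bool set) \<and> length xs = n}" by (simp add: qverts_def)
  then show ?thesis using finite_lists_length_eq[of "UNIV::bool set" n] by simp
qed

definition cond :: "nat \<Rightarrow> bool list set set \<Rightarrow> nat \<Rightarrow> bool list set \<Rightarrow> bool" where
  "cond n F p T \<longleftrightarrow> card {x\<in>T. parity x \<noteq> p} \<le> card {x\<in>T. parity x = p} \<and>
     (\<forall>u\<in>T. \<forall>v. parity u = p \<and> v \<notin> T \<and> {u,v} \<in> qedges n \<longrightarrow> {u,v} \<in> F)"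

lemma disc_iff: "disc_halfway n F T \<longleftrightarrow> T \<noteq> {} \<and> T \<subset> qverts n \<and> (cond n F 0 T \<or> cond n F 1 T)"
proof -
  have h0: "{x\<in>T. parity x \<noteq> 0} = {x\<in>T. parity x = 1}"
    and h1: "{x\<in>T. parity x \<noteq> 1} = {x\<in>T. parity x = 0}" by (auto simp: parity_def)
  show ?thesis unfolding disc_halfway_def cond_def parcount_def h0 h1 by simp
qed


lemma cond_no_ham:
  assumes c: "cond n F p T" and ne: "T \<noteq> {}" and sub: "T \<subset> qverts n"
    and hc: "ham_cycle (qverts n) (qedges n - F) cs"
  shows False
proof -
  define N where "N = length cs"
  define E where "E = {x\<in>T. parity x = p}"
  define Ov where "Ov = {x\<in>T. parity x \<noteq> p}"
  define suc where "suc i = (i+1) mod N" for i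
  define pre where "pre i = (i + N - 1) mod N" for i
  define PE where "PE = {i. i < N \<and> cs!i \<in> E}"
  define PO where "PO = {i. i < N \<and> cs!i \<in> Ov}"
  from hc have dist: "distinct cs" and setcs: "set cs = qverts n" and N3: "N \<ge> 3"
    and edge: "\<And>i. i < N \<Longrightarrow> {cs!i, cs!suc i} \<in> qedges n - F"
    by (auto simp: ham_cycle_def suc_def N_def)
  have cardEO: "card Ov \<le> card E" using c by (simp add: cond_def E_def Ov_def)
  have Npos: "N > 0" using N3 by simp
  have suc_lt: "suc i < N" for i using Npos by (simp add: suc_def)
  have pre_lt: "pre i < N" for i using Npos by (simp add: pre_def)
  have suc_pre: "suc (pre i) = i" if "i < N" for i
  proof (cases i)
    case 0 then show ?thesis using Npos by (simp add: suc_def pre_def)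
  next
    case (Suc m)
    then have "pre i = m" using that by (simp add: pre_def)
    then show ?thesis using that Suc by (simp add: suc_def)
  qed
  have pre_suc: "pre (suc i) = i" if "i < N" for i
  proof (cases "i + 1 = N")
    case True then show ?thesis using Npos by (simp add: suc_def pre_def)
  next
    case False
    then have "suc i = i + 1" using that by (simp add: suc_def)
    then show ?thesis using that by (simp add: pre_def)
  qed
  have inj_cs: "inj_on (nth cs) {..<N}" by (simp add: inj_on_def N_def nth_eq_iff_index_eq dist)
  have ET: "E \<subseteq> set cs" "Ov \<subseteq> set cs" using sub setcs by (auto simp: E_def Ov_def)
  have pos: "\<exists>i<N. cs!i = x" if "x \<in> set cs" for x
    using that unfolding N_def by (simp add: in_set_conv_nth)
  have imPE: "nth cs ` PE = E"
  proof
    show "nth cs ` PE \<subseteq> E" by (auto simp: PE_def)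
    show "E \<subseteq> nth cs ` PE"
    proof
      fix x assume "x \<in> E"
      then obtain i where "i < N" "cs!i = x" using ET pos by blast
      then show "x \<in> nth cs ` PE" using \<open>x \<in> E\<close> by (auto simp: PE_def)
    qed
  qed
  have imPO: "nth cs ` PO = Ov"
  proof
    show "nth cs ` PO \<subseteq> Ov" by (auto simp: PO_def)
    show "Ov \<subseteq> nth cs ` PO"
    proof
      fix x assume "x \<in> Ov"
      then obtain i where "i < N" "cs!i = x" using ET pos by blast
      then show "x \<in> nth cs ` PO" using \<open>x \<in> Ov\<close> by (auto simp: PO_def)
    qed
  qed
  have PEsub: "PE \<subseteq> {..<N}" and POsub: "PO \<subseteq> {..<N}" by (auto simp: PE_def PO_def)
  have cPE: "card PE = card E" using imPE card_image[OF inj_on_subset[OF inj_cs PEsub]] by simp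
  have cPO: "card PO = card Ov" using imPO card_image[OF inj_on_subset[OF inj_cs POsub]] by simp
  have step: "cs!j \<in> Ov" if "i \<in> PE" "j < N" "{cs!i, cs!j} \<in> qedges n - F" for i j
  proof -
    have x: "cs!i \<in> T" "parity (cs!i) = p" using that(1) by (auto simp: PE_def E_def)
    from that(3) have q: "qadj (cs!i) (cs!j)" "{cs!i, cs!j} \<notin> F" by (auto simp: qedges_iff)
    have "cs!j \<in> T"
    proof (rule ccontr)
      assume "cs!j \<notin> T"
      then have "{cs!i, cs!j} \<in> F" using c x that(3) unfolding cond_def by blast
      then show False using q by simp
    qed
    moreover have "parity (cs!j) \<noteq> p" using qadj_parity[OF q(1)] x by simp
    ultimately show ?thesis by (simp add: Ov_def)
  qed
  have sucPE: "suc i \<in> PO" if "i \<in> PE" for i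
    using step[OF that suc_lt] edge[of i] that suc_lt by (auto simp: PE_def PO_def)
  have prePE: "pre i \<in> PO" if "i \<in> PE" for i
  proof -
    have i: "i < N" using that by (simp add: PE_def)
    have "{cs!pre i, cs!i} \<in> qedges n - F" using edge[OF pre_lt[of i]] suc_pre[OF i] by simp
    then have "{cs!i, cs!pre i} \<in> qedges n - F" by (simp add: insert_commute)
    then show ?thesis using step[OF that pre_lt] pre_lt by (simp add: PO_def)
  qed
  have fin: "finite PO" using POsub finite_subset by blast
  have inj_suc: "inj_on suc PE" by (rule inj_on_inverseI[where g=pre]) (auto simp: PE_def pre_suc)
  have inj_pre: "inj_on pre PE" by (rule inj_on_inverseI[where g=suc]) (auto simp: PE_def suc_pre)
  have cs1: "card (suc ` PE) \<le> card PO" by (rule card_mono[OF fin]) (use sucPE in auto)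
  have cs2: "card (pre ` PE) \<le> card PO" by (rule card_mono[OF fin]) (use prePE in auto)
  have sucim: "suc ` PE = PO"
    by (rule card_subset_eq[OF fin]) (use sucPE cs1 card_image[OF inj_suc] cPE cPO cardEO in auto)
  have preim: "pre ` PE = PO"
    by (rule card_subset_eq[OF fin]) (use prePE cs2 card_image[OF inj_pre] cPE cPO cardEO in auto)
  define P where "P = PE \<union> PO"
  have clos: "suc i \<in> P" if "i \<in> P" for i
  proof (cases "i \<in> PE")
    case True then show ?thesis using sucPE by (simp add: P_def)
  next
    case False
    then have "i \<in> PO" using that by (simp add: P_def)
    then obtain k where k: "k \<in> PE" "i = pre k" using preim by auto
    then have "suc i = k" using suc_pre by (simp add: PE_def)
    then show ?thesis using k by (simp add: P_def)
  qed
  obtain x where x: "x \<in> T" using ne by blast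
  then obtain i0 where i0: "i0 < N" "cs!i0 = x" using sub setcs pos by blast
  have i0P: "i0 \<in> P" using i0 x by (cases "parity x = p") (auto simp: P_def PE_def PO_def E_def Ov_def)
  have allm: "(i0 + m) mod N \<in> P" for m
  proof (induction m)
    case 0 then show ?case using i0P i0 by simp
  next
    case (Suc m)
    have "(i0 + Suc m) mod N = suc ((i0 + m) mod N)" by (simp add: suc_def mod_Suc_eq)
    then show ?case using clos[OF Suc] by simp
  qed
  have "qverts n \<subseteq> T"
  proof
    fix y assume "y \<in> qverts n"
    then obtain i where i: "i < N" "cs!i = y" using setcs pos by blast
    have "(i0 + (N - i0 + i)) mod N = i" using i i0 by simp
    then have "i \<in> P" using allm[of "N - i0 + i"] by simp
    then show "y \<in> T" using i by (auto simp: P_def PE_def PO_def E_def Ov_def)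
  qed
  then show False using sub by blast
qed

lemma F_edges:
  assumes mf: "minimal_faulty n F" and c: "cond n F p T" and ne: "T \<noteq> {}" and sub: "T \<subset> qverts n"
    and f: "f \<in> F"
  shows "\<exists>u v. f = {u,v} \<and> u \<in> T \<and> parity u = p \<and> v \<notin> T \<and> {u,v} \<in> qedges n"
proof (rule ccontr)
  assume nf: "\<not> ?thesis"
  have ss: "F - {f} \<subset> F" using f by auto
  obtain cs where hc: "ham_cycle (qverts n) (qedges n - (F - {f})) cs"
    using mf ss unfolding minimal_faulty_def has_ham_cycle_def by blast
  have "cond n (F - {f}) p T" using c nf unfolding cond_def by blast
  then show False using cond_no_ham ne sub hc by blast
qed

lemma inside_healthy:
  assumes mf: "minimal_faulty n F" and c: "cond n F p T" and ne: "T \<noteq> {}" and sub: "T \<subset> qverts n"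
    and u: "u \<in> T" and v: "v \<in> T"
  shows "{u,v} \<notin> F"
proof
  assume "{u,v} \<in> F"
  from F_edges[OF mf c ne sub this] obtain a b where "{u,v} = {a,b}" "b \<notin> T" by blast
  then show False using u v by (auto simp: doubleton_eq_iff)
qed

lemma finite_T: "T \<subset> qverts n \<Longrightarrow> finite T"
  using finite_qverts finite_subset by blast

lemma surplus:
  assumes c: "cond n F p T" and sub: "T \<subset> qverts n" and p: "p < 2"
    and minT: "\<forall>T'. T' \<subset> T \<longrightarrow> \<not> disc_halfway n F T'"
    and A: "A \<subseteq> {x\<in>T. parity x = p}" "A \<noteq> {}"
    and cardle: "card {y\<in>T. parity y \<noteq> p \<and> (\<exists>e\<in>A. qadj e y)} \<le> card A"
  shows "A = {x\<in>T. parity x = p}"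
proof (rule ccontr)
  assume ne: "A \<noteq> {x\<in>T. parity x = p}"
  then obtain e where e: "e \<in> T" "parity e = p" "e \<notin> A" using A by blast
  define Nb where "Nb = {y\<in>T. parity y \<noteq> p \<and> (\<exists>e\<in>A. qadj e y)}"
  define T' where "T' = A \<union> Nb"
  have T'T: "T' \<subset> T"
  proof -
    have "T' \<subseteq> T" using A by (auto simp: T'_def Nb_def)
    moreover have "e \<notin> T'" using e by (auto simp: T'_def Nb_def)
    ultimately show ?thesis using e by blast
  qed
  have h1: "{x\<in>T'. parity x = p} = A" using A by (auto simp: T'_def Nb_def)
  have h2: "{x\<in>T'. parity x \<noteq> p} = Nb" using A by (auto simp: T'_def Nb_def)
  have "cond n F p T'"
    unfolding cond_def h1 h2
  proof
    show "card Nb \<le> card A" using cardle by (simp add: Nb_def)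
    show "\<forall>u\<in>T'. \<forall>v. parity u = p \<and> v \<notin> T' \<and> {u, v} \<in> qedges n \<longrightarrow> {u, v} \<in> F"
    proof (intro ballI allI impI)
      fix u v assume u: "u \<in> T'" and h: "parity u = p \<and> v \<notin> T' \<and> {u, v} \<in> qedges n"
      then have uA: "u \<in> A" by (auto simp: T'_def Nb_def)
      have q: "qadj u v" using h by (simp add: qedges_iff)
      have "v \<notin> T"
      proof
        assume "v \<in> T"
        moreover have "parity v \<noteq> p" using qadj_parity[OF q] h by simp
        ultimately have "v \<in> Nb" using uA q by (auto simp: Nb_def)
        then show False using h by (simp add: T'_def)
      qed
      then show "{u, v} \<in> F" using c uA A h unfolding cond_def by blast
    qed
  qed
  moreover have "T' \<noteq> {}" using A by (simp add: T'_def)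
  moreover have "T' \<subset> qverts n" using T'T sub by blast
  ultimately have "disc_halfway n F T'" using p by (auto simp: disc_iff less_2_cases_iff)
  then show False using minT T'T by blast
qed


definition deg2 :: "(nat \<Rightarrow> nat \<Rightarrow> bool) \<Rightarrow> nat \<Rightarrow> bool" where
  "deg2 r i \<longleftrightarrow> (r i 0 \<and> r i 1 \<and> \<not> r i 2 \<and> \<not> r i 3) \<or> (r i 0 \<and> \<not> r i 1 \<and> r i 2 \<and> \<not> r i 3) \<or> (r i 0 \<and> \<not> r i 1 \<and> \<not> r i 2 \<and> r i 3) \<or> (\<not> r i 0 \<and> r i 1 \<and> r i 2 \<and> \<not> r i 3) \<or> (\<not> r i 0 \<and> r i 1 \<and> \<not> r i 2 \<and> r i 3) \<or> (\<not> r i 0 \<and> \<not> r i 1 \<and> r i 2 \<and> r i 3)"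

fun clp :: "(nat \<Rightarrow> nat \<Rightarrow> bool) \<Rightarrow> nat \<times> nat \<times> nat \<times> nat \<Rightarrow> bool" where
  "clp r (j,a,b,c) \<longleftrightarrow> r a j \<and> r b j \<and> r c j \<and> deg2 r a \<and> deg2 r b \<and> deg2 r c"

definition L3 :: "(nat \<times> nat \<times> nat \<times> nat \<times> nat \<times> nat) list" where
  "L3 = [(0,1,2,0,1,2), (0,1,2,0,2,1), (0,1,2,1,0,2), (0,1,2,1,2,0), (0,1,2,2,0,1), (0,1,2,2,1,0), (0,2,1,0,1,2), (0,2,1,0,2,1), (0,2,1,1,0,2), (0,2,1,1,2,0), (0,2,1,2,0,1), (0,2,1,2,1,0)]"

fun cyc3 :: "(nat \<Rightarrow> nat \<Rightarrow> bool) \<Rightarrow> nat \<times> nat \<times> nat \<times> nat \<times> nat \<times> nat \<Rightarrow> bool" where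
  "cyc3 r (a,b,c,w,x,y) \<longleftrightarrow> r a w \<and> r b w \<and> r b x \<and> r c x \<and> r c y \<and> r a y"

lemma comb3:
  fixes r :: "nat \<Rightarrow> nat \<Rightarrow> bool"
  assumes surp: "\<And>A S. A \<subseteq> {0,1,2} \<Longrightarrow> S \<subseteq> {0,1,2} \<Longrightarrow> A \<noteq> {} \<Longrightarrow> (\<exists>i\<in>{0,1,2}. i \<notin> A) \<Longrightarrow> card S \<le> card A \<Longrightarrow> \<exists>i\<in>A. \<exists>j\<in>{0,1,2}. j \<notin> S \<and> r i j"
  shows "(\<exists>t\<in>set L3. cyc3 r t)"
proof -
  have h0: "r 0 1 \<or> r 0 2" using surp[of "{0}" "{0}"] by simp
  have h1: "r 0 0 \<or> r 0 2" using surp[of "{0}" "{1}"] by simp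
  have h2: "r 0 0 \<or> r 0 1" using surp[of "{0}" "{2}"] by simp
  have h3: "r 1 1 \<or> r 1 2" using surp[of "{1}" "{0}"] by simp
  have h4: "r 1 0 \<or> r 1 2" using surp[of "{1}" "{1}"] by simp
  have h5: "r 1 0 \<or> r 1 1" using surp[of "{1}" "{2}"] by simp
  have h6: "r 2 1 \<or> r 2 2" using surp[of "{2}" "{0}"] by simp
  have h7: "r 2 0 \<or> r 2 2" using surp[of "{2}" "{1}"] by simp
  have h8: "r 2 0 \<or> r 2 1" using surp[of "{2}" "{2}"] by simp
  have h9: "r 0 2 \<or> r 1 2" using surp[of "{0,1}" "{0,1}"] by simp
  have h10: "r 0 1 \<or> r 1 1" using surp[of "{0,1}" "{0,2}"] by simp
  have h11: "r 0 0 \<or> r 1 0" using surp[of "{0,1}" "{1,2}"] by simp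
  have h12: "r 0 2 \<or> r 2 2" using surp[of "{0,2}" "{0,1}"] by simp
  have h13: "r 0 1 \<or> r 2 1" using surp[of "{0,2}" "{0,2}"] by simp
  have h14: "r 0 0 \<or> r 2 0" using surp[of "{0,2}" "{1,2}"] by simp
  have h15: "r 1 2 \<or> r 2 2" using surp[of "{1,2}" "{0,1}"] by simp
  have h16: "r 1 1 \<or> r 2 1" using surp[of "{1,2}" "{0,2}"] by simp
  have h17: "r 1 0 \<or> r 2 0" using surp[of "{1,2}" "{1,2}"] by simp
  note cl = h0 h1 h2 h3 h4 h5 h6 h7 h8 h9 h10 h11 h12 h13 h14 h15 h16 h17
  show ?thesis
    unfolding L3_def 
    apply (simp only: list.set bex_simps insert_iff empty_iff simp_thms cyc3.simps  split prod.case)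
    using cl by sat
qed

definition L4 :: "(nat \<times> nat \<times> nat \<times> nat \<times> nat \<times> nat \<times> nat \<times> nat) list" where
  "L4 = [(0,1,2,3,0,1,2,3), (0,1,2,3,0,1,3,2), (0,1,2,3,0,2,1,3), (0,1,2,3,0,2,3,1), (0,1,2,3,0,3,1,2), (0,1,2,3,0,3,2,1), (0,1,2,3,1,0,2,3), (0,1,2,3,1,0,3,2), (0,1,2,3,1,2,0,3), (0,1,2,3,1,2,3,0), (0,1,2,3,1,3,0,2), (0,1,2,3,1,3,2,0), (0,1,2,3,2,0,1,3), (0,1,2,3,2,0,3,1), (0,1,2,3,2,1,0,3), (0,1,2,3,2,1,3,0), (0,1,2,3,2,3,0,1), (0,1,2,3,2,3,1,0), (0,1,2,3,3,0,1,2), (0,1,2,3,3,0,2,1), (0,1,2,3,3,1,0,2), (0,1,2,3,3,1,2,0), (0,1,2,3,3,2,0,1), (0,1,2,3,3,2,1,0), (0,1,3,2,0,1,2,3), (0,1,3,2,0,1,3,2), (0,1,3,2,0,2,1,3), (0,1,3,2,0,2,3,1), (0,1,3,2,0,3,1,2), (0,1,3,2,0,3,2,1), (0,1,3,2,1,0,2,3), (0,1,3,2,1,0,3,2), (0,1,3,2,1,2,0,3), (0,1,3,2,1,2,3,0), (0,1,3,2,1,3,0,2), (0,1,3,2,1,3,2,0), (0,1,3,2,2,0,1,3), (0,1,3,2,2,0,3,1), (0,1,3,2,2,1,0,3), (0,1,3,2,2,1,3,0), (0,1,3,2,2,3,0,1), (0,1,3,2,2,3,1,0), (0,1,3,2,3,0,1,2),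 (0,1,3,2,3,0,2,1), (0,1,3,2,3,1,0,2), (0,1,3,2,3,1,2,0), (0,1,3,2,3,2,0,1), (0,1,3,2,3,2,1,0), (0,2,1,3,0,1,2,3), (0,2,1,3,0,1,3,2), (0,2,1,3,0,2,1,3), (0,2,1,3,0,2,3,1), (0,2,1,3,0,3,1,2), (0,2,1,3,0,3,2,1), (0,2,1,3,1,0,2,3), (0,2,1,3,1,0,3,2), (0,2,1,3,1,2,0,3), (0,2,1,3,1,2,3,0), (0,2,1,3,1,3,0,2), (0,2,1,3,1,3,2,0), (0,2,1,3,2,0,1,3), (0,2,1,3,2,0,3,1), (0,2,1,3,2,1,0,3), (0,2,1,3,2,1,3,0), (0,2,1,3,2,3,0,1), (0,2,1,3,2,3,1,0), (0,2,1,3,3,0,1,2), (0,2,1,3,3,0,2,1), (0,2,1,3,3,1,0,2), (0,2,1,3,3,1,2,0), (0,2,1,3,3,2,0,1), (0,2,1,3,3,2,1,0), (0,2,3,1,0,1,2,3), (0,2,3,1,0,1,3,2), (0,2,3,1,0,2,1,3), (0,2,3,1,0,2,3,1), (0,2,3,1,0,3,1,2), (0,2,3,1,0,3,2,1), (0,2,3,1,1,0,2,3), (0,2,3,1,1,0,3,2), (0,2,3,1,1,2,0,3), (0,2,3,1,1,2,3,0), (0,2,3,1,1,3,0,2), (0,2,3,1,1,3,2,0), (0,2,3,1,2,0,1,3), (0,2,3,1,2,0,3,1), (0,2,3,1,2,1,0,3), (0,2,3,1,2,1,3,0), (0,2,3,1,2,3,0,1), (0,2,3,1,2,3,1,0),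 (0,2,3,1,3,0,1,2), (0,2,3,1,3,0,2,1), (0,2,3,1,3,1,0,2), (0,2,3,1,3,1,2,0), (0,2,3,1,3,2,0,1), (0,2,3,1,3,2,1,0), (0,3,1,2,0,1,2,3), (0,3,1,2,0,1,3,2), (0,3,1,2,0,2,1,3), (0,3,1,2,0,2,3,1), (0,3,1,2,0,3,1,2), (0,3,1,2,0,3,2,1), (0,3,1,2,1,0,2,3), (0,3,1,2,1,0,3,2), (0,3,1,2,1,2,0,3), (0,3,1,2,1,2,3,0), (0,3,1,2,1,3,0,2), (0,3,1,2,1,3,2,0), (0,3,1,2,2,0,1,3), (0,3,1,2,2,0,3,1), (0,3,1,2,2,1,0,3), (0,3,1,2,2,1,3,0), (0,3,1,2,2,3,0,1), (0,3,1,2,2,3,1,0), (0,3,1,2,3,0,1,2), (0,3,1,2,3,0,2,1), (0,3,1,2,3,1,0,2), (0,3,1,2,3,1,2,0), (0,3,1,2,3,2,0,1), (0,3,1,2,3,2,1,0), (0,3,2,1,0,1,2,3), (0,3,2,1,0,1,3,2), (0,3,2,1,0,2,1,3), (0,3,2,1,0,2,3,1), (0,3,2,1,0,3,1,2), (0,3,2,1,0,3,2,1), (0,3,2,1,1,0,2,3), (0,3,2,1,1,0,3,2), (0,3,2,1,1,2,0,3), (0,3,2,1,1,2,3,0), (0,3,2,1,1,3,0,2), (0,3,2,1,1,3,2,0), (0,3,2,1,2,0,1,3), (0,3,2,1,2,0,3,1), (0,3,2,1,2,1,0,3), (0,3,2,1,2,1,3,0), (0,3,2,1,2,3,0,1),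 (0,3,2,1,2,3,1,0), (0,3,2,1,3,0,1,2), (0,3,2,1,3,0,2,1), (0,3,2,1,3,1,0,2), (0,3,2,1,3,1,2,0), (0,3,2,1,3,2,0,1), (0,3,2,1,3,2,1,0)]"

fun cyc4 :: "(nat \<Rightarrow> nat \<Rightarrow> bool) \<Rightarrow> nat \<times> nat \<times> nat \<times> nat \<times> nat \<times> nat \<times> nat \<times> nat \<Rightarrow> bool" where
  "cyc4 r (a,b,c,d,w,x,y,z) \<longleftrightarrow> r a w \<and> r b w \<and> r b x \<and> r c x \<and> r c y \<and> r d y \<and> r d z \<and> r a z"

definition CL4 :: "(nat \<times> nat \<times> nat \<times> nat) list" where
  "CL4 = [(0,0,1,2), (0,0,1,3), (0,0,2,3), (0,1,2,3), (1,0,1,2), (1,0,1,3), (1,0,2,3), (1,1,2,3), (2,0,1,2), (2,0,1,3), (2,0,2,3), (2,1,2,3), (3,0,1,2), (3,0,1,3), (3,0,2,3), (3,1,2,3)]"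

lemma comb4:
  fixes r :: "nat \<Rightarrow> nat \<Rightarrow> bool"
  assumes surp: "\<And>A S. A \<subseteq> {0,1,2,3} \<Longrightarrow> S \<subseteq> {0,1,2,3} \<Longrightarrow> A \<noteq> {} \<Longrightarrow> (\<exists>i\<in>{0,1,2,3}. i \<notin> A) \<Longrightarrow> card S \<le> card A \<Longrightarrow> \<exists>i\<in>A. \<exists>j\<in>{0,1,2,3}. j \<notin> S \<and> r i j"
  shows "(\<exists>t\<in>set L4. cyc4 r t) \<or> (\<exists>t\<in>set CL4. clp r t)"
proof -
  have h0: "r 0 1 \<or> r 0 2 \<or> r 0 3" using surp[of "{0}" "{0}"] by simp
  have h1: "r 0 0 \<or> r 0 2 \<or> r 0 3" using surp[of "{0}" "{1}"] by simp
  have h2: "r 0 0 \<or> r 0 1 \<or> r 0 3" using surp[of "{0}" "{2}"] by simp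
  have h3: "r 0 0 \<or> r 0 1 \<or> r 0 2" using surp[of "{0}" "{3}"] by simp
  have h4: "r 1 1 \<or> r 1 2 \<or> r 1 3" using surp[of "{1}" "{0}"] by simp
  have h5: "r 1 0 \<or> r 1 2 \<or> r 1 3" using surp[of "{1}" "{1}"] by simp
  have h6: "r 1 0 \<or> r 1 1 \<or> r 1 3" using surp[of "{1}" "{2}"] by simp
  have h7: "r 1 0 \<or> r 1 1 \<or> r 1 2" using surp[of "{1}" "{3}"] by simp
  have h8: "r 2 1 \<or> r 2 2 \<or> r 2 3" using surp[of "{2}" "{0}"] by simp
  have h9: "r 2 0 \<or> r 2 2 \<or> r 2 3" using surp[of "{2}" "{1}"] by simp
  have h10: "r 2 0 \<or> r 2 1 \<or> r 2 3" using surp[of "{2}" "{2}"] by simp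
  have h11: "r 2 0 \<or> r 2 1 \<or> r 2 2" using surp[of "{2}" "{3}"] by simp
  have h12: "r 3 1 \<or> r 3 2 \<or> r 3 3" using surp[of "{3}" "{0}"] by simp
  have h13: "r 3 0 \<or> r 3 2 \<or> r 3 3" using surp[of "{3}" "{1}"] by simp
  have h14: "r 3 0 \<or> r 3 1 \<or> r 3 3" using surp[of "{3}" "{2}"] by simp
  have h15: "r 3 0 \<or> r 3 1 \<or> r 3 2" using surp[of "{3}" "{3}"] by simp
  have h16: "r 0 2 \<or> r 0 3 \<or> r 1 2 \<or> r 1 3" using surp[of "{0,1}" "{0,1}"] by simp
  have h17: "r 0 1 \<or> r 0 3 \<or> r 1 1 \<or> r 1 3" using surp[of "{0,1}" "{0,2}"] by simp
  have h18: "r 0 1 \<or> r 0 2 \<or> r 1 1 \<or> r 1 2" using surp[of "{0,1}" "{0,3}"] by simp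
  have h19: "r 0 0 \<or> r 0 3 \<or> r 1 0 \<or> r 1 3" using surp[of "{0,1}" "{1,2}"] by simp
  have h20: "r 0 0 \<or> r 0 2 \<or> r 1 0 \<or> r 1 2" using surp[of "{0,1}" "{1,3}"] by simp
  have h21: "r 0 0 \<or> r 0 1 \<or> r 1 0 \<or> r 1 1" using surp[of "{0,1}" "{2,3}"] by simp
  have h22: "r 0 2 \<or> r 0 3 \<or> r 2 2 \<or> r 2 3" using surp[of "{0,2}" "{0,1}"] by simp
  have h23: "r 0 1 \<or> r 0 3 \<or> r 2 1 \<or> r 2 3" using surp[of "{0,2}" "{0,2}"] by simp
  have h24: "r 0 1 \<or> r 0 2 \<or> r 2 1 \<or> r 2 2" using surp[of "{0,2}" "{0,3}"] by simp
  have h25: "r 0 0 \<or> r 0 3 \<or> r 2 0 \<or> r 2 3" using surp[of "{0,2}" "{1,2}"] by simp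
  have h26: "r 0 0 \<or> r 0 2 \<or> r 2 0 \<or> r 2 2" using surp[of "{0,2}" "{1,3}"] by simp
  have h27: "r 0 0 \<or> r 0 1 \<or> r 2 0 \<or> r 2 1" using surp[of "{0,2}" "{2,3}"] by simp
  have h28: "r 0 2 \<or> r 0 3 \<or> r 3 2 \<or> r 3 3" using surp[of "{0,3}" "{0,1}"] by simp
  have h29: "r 0 1 \<or> r 0 3 \<or> r 3 1 \<or> r 3 3" using surp[of "{0,3}" "{0,2}"] by simp
  have h30: "r 0 1 \<or> r 0 2 \<or> r 3 1 \<or> r 3 2" using surp[of "{0,3}" "{0,3}"] by simp
  have h31: "r 0 0 \<or> r 0 3 \<or> r 3 0 \<or> r 3 3" using surp[of "{0,3}" "{1,2}"] by simp
  have h32: "r 0 0 \<or> r 0 2 \<or> r 3 0 \<or> r 3 2" using surp[of "{0,3}" "{1,3}"] by simp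
  have h33: "r 0 0 \<or> r 0 1 \<or> r 3 0 \<or> r 3 1" using surp[of "{0,3}" "{2,3}"] by simp
  have h34: "r 1 2 \<or> r 1 3 \<or> r 2 2 \<or> r 2 3" using surp[of "{1,2}" "{0,1}"] by simp
  have h35: "r 1 1 \<or> r 1 3 \<or> r 2 1 \<or> r 2 3" using surp[of "{1,2}" "{0,2}"] by simp
  have h36: "r 1 1 \<or> r 1 2 \<or> r 2 1 \<or> r 2 2" using surp[of "{1,2}" "{0,3}"] by simp
  have h37: "r 1 0 \<or> r 1 3 \<or> r 2 0 \<or> r 2 3" using surp[of "{1,2}" "{1,2}"] by simp
  have h38: "r 1 0 \<or> r 1 2 \<or> r 2 0 \<or> r 2 2" using surp[of "{1,2}" "{1,3}"] by simp
  have h39: "r 1 0 \<or> r 1 1 \<or> r 2 0 \<or> r 2 1" using surp[of "{1,2}" "{2,3}"] by simp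
  have h40: "r 1 2 \<or> r 1 3 \<or> r 3 2 \<or> r 3 3" using surp[of "{1,3}" "{0,1}"] by simp
  have h41: "r 1 1 \<or> r 1 3 \<or> r 3 1 \<or> r 3 3" using surp[of "{1,3}" "{0,2}"] by simp
  have h42: "r 1 1 \<or> r 1 2 \<or> r 3 1 \<or> r 3 2" using surp[of "{1,3}" "{0,3}"] by simp
  have h43: "r 1 0 \<or> r 1 3 \<or> r 3 0 \<or> r 3 3" using surp[of "{1,3}" "{1,2}"] by simp
  have h44: "r 1 0 \<or> r 1 2 \<or> r 3 0 \<or> r 3 2" using surp[of "{1,3}" "{1,3}"] by simp
  have h45: "r 1 0 \<or> r 1 1 \<or> r 3 0 \<or> r 3 1" using surp[of "{1,3}" "{2,3}"] by simp
  have h46: "r 2 2 \<or> r 2 3 \<or> r 3 2 \<or> r 3 3" using surp[of "{2,3}" "{0,1}"] by simp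
  have h47: "r 2 1 \<or> r 2 3 \<or> r 3 1 \<or> r 3 3" using surp[of "{2,3}" "{0,2}"] by simp
  have h48: "r 2 1 \<or> r 2 2 \<or> r 3 1 \<or> r 3 2" using surp[of "{2,3}" "{0,3}"] by simp
  have h49: "r 2 0 \<or> r 2 3 \<or> r 3 0 \<or> r 3 3" using surp[of "{2,3}" "{1,2}"] by simp
  have h50: "r 2 0 \<or> r 2 2 \<or> r 3 0 \<or> r 3 2" using surp[of "{2,3}" "{1,3}"] by simp
  have h51: "r 2 0 \<or> r 2 1 \<or> r 3 0 \<or> r 3 1" using surp[of "{2,3}" "{2,3}"] by simp
  have h52: "r 0 3 \<or> r 1 3 \<or> r 2 3" using surp[of "{0,1,2}" "{0,1,2}"] by simp
  have h53: "r 0 2 \<or> r 1 2 \<or> r 2 2" using surp[of "{0,1,2}" "{0,1,3}"] by simp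
  have h54: "r 0 1 \<or> r 1 1 \<or> r 2 1" using surp[of "{0,1,2}" "{0,2,3}"] by simp
  have h55: "r 0 0 \<or> r 1 0 \<or> r 2 0" using surp[of "{0,1,2}" "{1,2,3}"] by simp
  have h56: "r 0 3 \<or> r 1 3 \<or> r 3 3" using surp[of "{0,1,3}" "{0,1,2}"] by simp
  have h57: "r 0 2 \<or> r 1 2 \<or> r 3 2" using surp[of "{0,1,3}" "{0,1,3}"] by simp
  have h58: "r 0 1 \<or> r 1 1 \<or> r 3 1" using surp[of "{0,1,3}" "{0,2,3}"] by simp
  have h59: "r 0 0 \<or> r 1 0 \<or> r 3 0" using surp[of "{0,1,3}" "{1,2,3}"] by simp
  have h60: "r 0 3 \<or> r 2 3 \<or> r 3 3" using surp[of "{0,2,3}" "{0,1,2}"] by simp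
  have h61: "r 0 2 \<or> r 2 2 \<or> r 3 2" using surp[of "{0,2,3}" "{0,1,3}"] by simp
  have h62: "r 0 1 \<or> r 2 1 \<or> r 3 1" using surp[of "{0,2,3}" "{0,2,3}"] by simp
  have h63: "r 0 0 \<or> r 2 0 \<or> r 3 0" using surp[of "{0,2,3}" "{1,2,3}"] by simp
  have h64: "r 1 3 \<or> r 2 3 \<or> r 3 3" using surp[of "{1,2,3}" "{0,1,2}"] by simp
  have h65: "r 1 2 \<or> r 2 2 \<or> r 3 2" using surp[of "{1,2,3}" "{0,1,3}"] by simp
  have h66: "r 1 1 \<or> r 2 1 \<or> r 3 1" using surp[of "{1,2,3}" "{0,2,3}"] by simp
  have h67: "r 1 0 \<or> r 2 0 \<or> r 3 0" using surp[of "{1,2,3}" "{1,2,3}"] by simp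
  note cl = h0 h1 h2 h3 h4 h5 h6 h7 h8 h9 h10 h11 h12 h13 h14 h15 h16 h17 h18 h19 h20 h21 h22 h23 h24 h25 h26 h27 h28 h29 h30 h31 h32 h33 h34 h35 h36 h37 h38 h39 h40 h41 h42 h43 h44 h45 h46 h47 h48 h49 h50 h51 h52 h53 h54 h55 h56 h57 h58 h59 h60 h61 h62 h63 h64 h65 h66 h67
  show ?thesis
    unfolding L4_def CL4_def deg2_def
    apply (simp only: list.set bex_simps insert_iff empty_iff simp_thms cyc4.simps clp.simps deg2_def split prod.case)
    using cl by sat
qed


lemma balance:
  assumes c: "cond n F p T" and sub: "T \<subset> qverts n" and p: "p < 2"
    and minT: "\<forall>T'. T' \<subset> T \<longrightarrow> \<not> disc_halfway n F T'" and ev: "even (card T)"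
  shows "card {x\<in>T. parity x = p} = card {x\<in>T. parity x \<noteq> p}"
proof (rule ccontr)
  define E where "E = {x\<in>T. parity x = p}"
  define Ov where "Ov = {x\<in>T. parity x \<noteq> p}"
  assume neq: "card {x\<in>T. parity x = p} \<noteq> card {x\<in>T. parity x \<noteq> p}"
  have le: "card Ov \<le> card E" using c by (simp add: cond_def E_def Ov_def)
  have fin: "finite T" using sub by (rule finite_T)
  have "E \<union> Ov = T" "E \<inter> Ov = {}" by (auto simp: E_def Ov_def)
  then have sum: "card E + card Ov = card T" using fin card_Un_disjoint[of E Ov]
    by (metis finite_Un)
  have "card E \<ge> card Ov + 2"
  proof -
    have "card E \<noteq> card Ov" using neq by (simp add: E_def Ov_def)
    moreover have "card E \<noteq> card Ov + 1"
    proof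
      assume "card E = card Ov + 1"
      then have "card T = 2 * card Ov + 1" using sum by simp
      then show False using ev by simp
    qed
    ultimately show ?thesis using le by linarith
  qed
  then obtain A where A: "A \<subseteq> E" "card A = card Ov + 1"
    using obtain_subset_with_card_n[of "card Ov + 1" E] by auto
  have finE: "finite E" using fin by (simp add: E_def)
  have Ane: "A \<noteq> {}" using A by auto
  have "{y\<in>T. parity y \<noteq> p \<and> (\<exists>e\<in>A. qadj e y)} \<subseteq> Ov" by (auto simp: Ov_def)
  then have "card {y\<in>T. parity y \<noteq> p \<and> (\<exists>e\<in>A. qadj e y)} \<le> card Ov"
    using fin by (intro card_mono) (auto simp: Ov_def)
  then have "A = E" using surplus[OF c sub p minT _ Ane] A by (simp add: E_def)
  then show False using A \<open>card E \<ge> card Ov + 2\<close> by simp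
qed

lemma surplus_r:
  fixes k :: nat
  assumes c: "cond n F p T" and sub: "T \<subset> qverts n" and p: "p < 2"
    and minT: "\<forall>T'. T' \<subset> T \<longrightarrow> \<not> disc_halfway n F T'"
    and f: "bij_betw f {0..<k} {x\<in>T. parity x = p}"
    and g: "bij_betw g {0..<k} {x\<in>T. parity x \<noteq> p}"
    and A: "A \<subseteq> {0..<k}" and S: "S \<subseteq> {0..<k}" and Ane: "A \<noteq> {}"
    and Ai: "\<exists>i\<in>{0..<k}. i \<notin> A" and cS: "card S \<le> card A"
  shows "\<exists>i\<in>A. \<exists>j\<in>{0..<k}. j \<notin> S \<and> qadj (f i) (g j)"
proof (rule ccontr)
  assume na: "\<not> ?thesis"
  have finS: "finite S" by (rule finite_subset[OF S]) simp
  have fim: "f ` {0..<k} = {x\<in>T. parity x = p}" using f by (simp add: bij_betw_def)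
  have gim: "g ` {0..<k} = {x\<in>T. parity x \<noteq> p}" using g by (simp add: bij_betw_def)
  have finj: "inj_on f {0..<k}" using f by (simp add: bij_betw_def)
  have ginj: "inj_on g {0..<k}" using g by (simp add: bij_betw_def)
  have Asub: "f ` A \<subseteq> {x\<in>T. parity x = p}" using A fim by blast
  have Ane': "f ` A \<noteq> {}" using Ane by simp
  have Nsub: "{y\<in>T. parity y \<noteq> p \<and> (\<exists>e\<in>f ` A. qadj e y)} \<subseteq> g ` S"
  proof
    fix y assume y: "y \<in> {y\<in>T. parity y \<noteq> p \<and> (\<exists>e\<in>f ` A. qadj e y)}"
    then have "y \<in> g ` {0..<k}" using gim by auto
    then obtain j where j: "j \<in> {0..<k}" "y = g j" by blast
    from y obtain i where i: "i \<in> A" "qadj (f i) y" by auto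
    have "j \<in> S" using na i j by blast
    then show "y \<in> g ` S" using j by simp
  qed
  have "card {y\<in>T. parity y \<noteq> p \<and> (\<exists>e\<in>f ` A. qadj e y)} \<le> card (g ` S)"
    by (rule card_mono[OF _ Nsub]) (use finS in simp)
  also have "\<dots> \<le> card S" by (rule card_image_le) (use S finS in simp)
  also have "\<dots> \<le> card A" by (rule cS)
  also have "\<dots> = card (f ` A)" using card_image[OF inj_on_subset[OF finj A]] by simp
  finally have "f ` A = {x\<in>T. parity x = p}" using surplus[OF c sub p minT Asub Ane'] by blast
  moreover obtain i where i: "i \<in> {0..<k}" "i \<notin> A" using Ai by blast
  ultimately have "f i \<in> f ` A" using fim by blast
  then obtain i' where "i' \<in> A" "f i = f i'" by blast
  then have "i = i'" using inj_onD[OF finj] i A by blast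
  then show False using i \<open>i' \<in> A\<close> by simp
qed

lemma flip_flip: "flip (flip a i) i = a"
  by (cases "i < length a") (simp_all add: flip_def list_update_beyond)

lemma subcube4:
  assumes a: "a \<in> qverts n" and ac: "qadj a c" and ad: "qadj a d" and bc: "qadj b c" and bd: "qadj b d"
    and ab: "a \<noteq> b" and cd: "c \<noteq> d"
  shows "is_subcube n 2 {a,b,c,d}"
proof -
  have la: "length a = n" using a by (simp add: qverts_def)
  obtain i where i: "i < n" "c = flip a i" using qadj_flip[OF ac] la by metis
  obtain j where j: "j < n" "d = flip a j" using qadj_flip[OF ad] la by metis
  have ij: "i \<noteq> j" using cd i j by auto
  obtain i' where i': "b = flip c i'" using qadj_flip[OF qadj_sym[OF bc]] by metis
  obtain j' where j': "b = flip d j'" using qadj_flip[OF qadj_sym[OF bd]] by metis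
  have "i' \<noteq> i" using i' i ab flip_flip by metis
  have "j' \<noteq> j" using j' j ab flip_flip by metis
  have "i' = j"
  proof (rule ccontr)
    assume "i' \<noteq> j"
    then have "b ! j = a ! j" using i' i ij by (simp add: flip_def)
    moreover have "b ! j = (\<not> a ! j)" using j' j \<open>j' \<noteq> j\<close> la by (simp add: flip_def)
    ultimately show False by simp
  qed
  then have b: "b = flip (flip a i) j" using i' i by simp
  define I where "I = {0..<n} - {i,j}"
  have cI: "card I = n - 2" using i j ij by (simp add: I_def card_Diff_subset)
  have n2: "2 \<le> n" using i j ij by linarith
  have "{a,b,c,d} = {x\<in>qverts n. \<forall>l\<in>I. x!l = a!l}"
  proof
    show "{a,b,c,d} \<subseteq> {x\<in>qverts n. \<forall>l\<in>I. x!l = a!l}"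
      using a la b i j by (auto simp: I_def flip_def qverts_def nth_list_update)
    show "{x\<in>qverts n. \<forall>l\<in>I. x!l = a!l} \<subseteq> {a,b,c,d}"
    proof
      fix x assume x: "x \<in> {x\<in>qverts n. \<forall>l\<in>I. x!l = a!l}"
      then have lx: "length x = n" and ag: "\<And>l. l < n \<Longrightarrow> l \<noteq> i \<Longrightarrow> l \<noteq> j \<Longrightarrow> x!l = a!l"
        by (auto simp: qverts_def I_def)
      consider "x!i = a!i" "x!j = a!j" | "x!i \<noteq> a!i" "x!j = a!j" | "x!i = a!i" "x!j \<noteq> a!j"
        | "x!i \<noteq> a!i" "x!j \<noteq> a!j" by blast
      then show "x \<in> {a,b,c,d}"
      proof cases
        case 1
        have "x = a" by (rule nth_equalityI) (use lx la ag 1 in auto)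
        then show ?thesis by simp
      next
        case 2
        have "x = c" unfolding i(2) flip_def
          by (rule nth_equalityI) (use lx la ag 2 i ij in \<open>auto simp: nth_list_update\<close>)
        then show ?thesis by simp
      next
        case 3
        have "x = d" unfolding j(2) flip_def
          by (rule nth_equalityI) (use lx la ag 3 j ij in \<open>auto simp: nth_list_update\<close>)
        then show ?thesis by simp
      next
        case 4
        have "x = b" unfolding b flip_def
          by (rule nth_equalityI) (use lx la ag 4 i j ij in \<open>auto simp: nth_list_update\<close>)
        then show ?thesis by simp
      qed
    qed
  qed
  then show ?thesis unfolding is_subcube_def
    using cI n2 a i j by (intro exI[of _ I] exI[of _ a]) (auto simp: I_def)
qed

lemma less4: "(i::nat) < 4 \<Longrightarrow> i = 0 \<or> i = 1 \<or> i = 2 \<or> i = 3" by arith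
lemma less6: "(i::nat) < 6 \<Longrightarrow> i = 0 \<or> i = 1 \<or> i = 2 \<or> i = 3 \<or> i = 4 \<or> i = 5" by arith
lemma less8: "(i::nat) < 8 \<Longrightarrow> i = 0 \<or> i = 1 \<or> i = 2 \<or> i = 3 \<or> i = 4 \<or> i = 5 \<or> i = 6 \<or> i = 7" by arith

lemma cyc6_lemma:
  assumes "distinct [x1,x2,x3,x4,x5,x6]" "set [x1,x2,x3,x4,x5,x6] \<subseteq> T"
    "qadj x1 x2" "qadj x2 x3" "qadj x3 x4" "qadj x4 x5" "qadj x5 x6" "qadj x6 x1"
  shows "has_cycle_in T 6"
  unfolding has_cycle_in_def
proof (intro exI[of _ "[x1,x2,x3,x4,x5,x6]"] conjI allI impI)
  fix i :: nat assume "i < 6"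
  then show "qadj ([x1,x2,x3,x4,x5,x6] ! i) ([x1,x2,x3,x4,x5,x6] ! ((i + 1) mod 6))"
    using assms less6 by fastforce
qed (use assms in auto)

lemma cyc8_lemma:
  assumes "distinct [x1,x2,x3,x4,x5,x6,x7,x8]" "set [x1,x2,x3,x4,x5,x6,x7,x8] \<subseteq> T"
    "qadj x1 x2" "qadj x2 x3" "qadj x3 x4" "qadj x4 x5" "qadj x5 x6" "qadj x6 x7" "qadj x7 x8" "qadj x8 x1"
  shows "has_cycle_in T 8"
  unfolding has_cycle_in_def
proof (intro exI[of _ "[x1,x2,x3,x4,x5,x6,x7,x8]"] conjI allI impI)
  fix i :: nat assume "i < 8"
  then show "qadj ([x1,x2,x3,x4,x5,x6,x7,x8] ! i) ([x1,x2,x3,x4,x5,x6,x7,x8] ! ((i + 1) mod 8))"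
    using assms less8 by fastforce
qed (use assms in auto)

lemma L3_prop: "\<forall>t\<in>set L3. case t of (a,b,c,w,x,y) \<Rightarrow> a<3 \<and> b<3 \<and> c<3 \<and> w<3 \<and> x<3 \<and> y<3 \<and>
   distinct [a,b,c] \<and> distinct [w,x,y]"
  by (simp add: L3_def)

lemma L4_prop: "\<forall>t\<in>set L4. case t of (a,b,c,d,w,x,y,z) \<Rightarrow> a<4 \<and> b<4 \<and> c<4 \<and> d<4 \<and> w<4 \<and> x<4 \<and> y<4 \<and> z<4 \<and>
   distinct [a,b,c,d] \<and> distinct [w,x,y,z]"
  by (simp add: L4_def)

lemma CL4_prop: "\<forall>t\<in>set CL4. case t of (j,a,b,c) \<Rightarrow> j<4 \<and> a<4 \<and> b<4 \<and> c<4 \<and> distinct [a,b,c]"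
  by (simp add: CL4_def)

lemma deg2_card: "deg2 r i \<Longrightarrow> card {j\<in>{0..<4::nat}. r i j} = 2"
proof -
  have e: "{j\<in>{0..<4::nat}. r i j} = (if r i 0 then {0} else {}) \<union> (if r i 1 then {1} else {}) \<union>
     (if r i 2 then {2} else {}) \<union> (if r i 3 then {3} else {})"
    by (auto split: if_splits dest: less4)
  assume "deg2 r i"
  then show ?thesis unfolding deg2_def e by (elim disjE) simp_all
qed


lemma hdeg_E:
  assumes mf: "minimal_faulty n F" and c: "cond n F p T" and ne: "T \<noteq> {}" and sub: "T \<subset> qverts n"
    and e: "e \<in> T" "parity e = p"
  shows "{y\<in>qverts n. {e,y} \<in> qedges n - F} = {y\<in>T. parity y \<noteq> p \<and> qadj e y}"
proof (rule set_eqI, rule iffI)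
  fix y assume "y \<in> {y\<in>qverts n. {e,y} \<in> qedges n - F}"
  then have y: "y \<in> qverts n" "qadj e y" "{e,y} \<notin> F" "{e,y} \<in> qedges n" by (auto simp: qedges_iff)
  have "y \<in> T"
  proof (rule ccontr)
    assume "y \<notin> T"
    then have "{e,y} \<in> F" using c e y(4) unfolding cond_def by blast
    then show False using y(3) by simp
  qed
  moreover have "parity y \<noteq> p" using qadj_parity[OF y(2)] e by simp
  ultimately show "y \<in> {y\<in>T. parity y \<noteq> p \<and> qadj e y}" using y by simp
next
  fix y assume y: "y \<in> {y\<in>T. parity y \<noteq> p \<and> qadj e y}"
  then have "y \<in> qverts n" "e \<in> qverts n" using sub e by auto
  moreover have "{e,y} \<notin> F" using inside_healthy[OF mf c ne sub e(1)] y by simp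
  ultimately show "y \<in> {y\<in>qverts n. {e,y} \<in> qedges n - F}" using y by (simp add: qedges_iff)
qed

locale ctx =
  fixes n :: nat and F :: "bool list set set" and T :: "bool list set" and p :: nat
    and k :: nat and f :: "nat \<Rightarrow> bool list" and g :: "nat \<Rightarrow> bool list"
  assumes mf: "minimal_faulty n F" and c: "cond n F p T" and ne: "T \<noteq> {}" and sub: "T \<subset> qverts n"
    and p: "p < 2" and minT: "\<forall>T'. T' \<subset> T \<longrightarrow> \<not> disc_halfway n F T'"
    and f: "bij_betw f {0..<k} {x\<in>T. parity x = p}"
    and g: "bij_betw g {0..<k} {x\<in>T. parity x \<noteq> p}"
begin

lemma fim: "f ` {0..<k} = {x\<in>T. parity x = p}" using f by (simp add: bij_betw_def)
lemma gim: "g ` {0..<k} = {x\<in>T. parity x \<noteq> p}" using g by (simp add: bij_betw_def)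
lemma finj: "inj_on f {0..<k}" using f by (simp add: bij_betw_def)
lemma ginj: "inj_on g {0..<k}" using g by (simp add: bij_betw_def)
lemma fT: "i < k \<Longrightarrow> f i \<in> T" using fim by auto
lemma gT: "i < k \<Longrightarrow> g i \<in> T" using gim by auto
lemma fp: "i < k \<Longrightarrow> parity (f i) = p" using fim by auto
lemma gp: "i < k \<Longrightarrow> parity (g i) \<noteq> p" using gim by auto
lemma feq: "i < k \<Longrightarrow> j < k \<Longrightarrow> f i = f j \<longleftrightarrow> i = j" using finj by (auto simp: inj_on_def)
lemma geq: "i < k \<Longrightarrow> j < k \<Longrightarrow> g i = g j \<longleftrightarrow> i = j" using ginj by (auto simp: inj_on_def)
lemma fg: "i < k \<Longrightarrow> j < k \<Longrightarrow> f i \<noteq> g j" using fp gp by metis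
lemma gf: "i < k \<Longrightarrow> j < k \<Longrightarrow> g j \<noteq> f i" using fp gp by metis
lemma fq: "i < k \<Longrightarrow> f i \<in> qverts n" using fT sub by blast
lemma gq: "i < k \<Longrightarrow> g i \<in> qverts n" using gT sub by blast

lemma sr: "A \<subseteq> {0..<k} \<Longrightarrow> S \<subseteq> {0..<k} \<Longrightarrow> A \<noteq> {} \<Longrightarrow> (\<exists>i\<in>{0..<k}. i \<notin> A) \<Longrightarrow> card S \<le> card A
  \<Longrightarrow> \<exists>i\<in>A. \<exists>j\<in>{0..<k}. j \<notin> S \<and> qadj (f i) (g j)"
  using surplus_r[OF c sub p minT f g] by blast

lemma Tim: "T = f ` {0..<k} \<union> g ` {0..<k}" using fim gim by auto

end

lemma part2:
  assumes "ctx n F T p 2 f g"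
  shows "is_subcube n 2 T"
proof -
  interpret ctx n F T p 2 f g by fact
  have u2: "{0..<2::nat} = {0,1}" by auto
  have rr: "qadj (f i) (g j)" if "i \<in> {0,1}" "j \<in> {0,1}" for i j
  proof -
    have "\<exists>i'\<in>{i}. \<exists>j'\<in>{0..<2}. j' \<notin> {1-j} \<and> qadj (f i') (g j')"
      by (rule sr) (use that in \<open>auto simp: u2\<close>)
    then show ?thesis using that by (auto simp: u2)
  qed
  have r00: "qadj (f 0) (g 0)" and r01: "qadj (f 0) (g 1)" and r10: "qadj (f 1) (g 0)"
    and r11: "qadj (f 1) (g 1)" using rr by auto
  have "T = {f 0, f 1, g 0, g 1}" using Tim unfolding u2 by auto
  moreover have "is_subcube n 2 {f 0, f 1, g 0, g 1}"
    by (rule subcube4) (use r00 r01 r10 r11 fq feq geq in auto)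
  ultimately show ?thesis by simp
qed

lemma part3:
  assumes "ctx n F T p 3 f g"
  shows "has_cycle_in T 6"
proof -
  interpret ctx n F T p 3 f g by fact
  have u3: "{0..<3::nat} = {0,1,2}" by auto
  have "\<exists>t\<in>set L3. cyc3 (\<lambda>i j. qadj (f i) (g j)) t"
    by (rule comb3) (rule sr[unfolded u3]; assumption)
  then obtain t where t: "t \<in> set L3" "cyc3 (\<lambda>i j. qadj (f i) (g j)) t" by blast
  obtain a b c w x y where tt: "t = (a,b,c,w,x,y)" by (cases t)
  have pr: "a<3 \<and> b<3 \<and> c<3 \<and> w<3 \<and> x<3 \<and> y<3 \<and> distinct [a,b,c] \<and> distinct [w,x,y]"
    using L3_prop t(1) tt by fastforce
  have cy: "qadj (f a) (g w) \<and> qadj (f b) (g w) \<and> qadj (f b) (g x) \<and> qadj (f c) (g x) \<and> qadj (f c) (g y) \<and> qadj (f a) (g y)"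
    using t(2) tt by simp
  show ?thesis
    by (rule cyc6_lemma[of "f a" "g w" "f b" "g x" "f c" "g y"])
      (use pr cy in \<open>auto simp: feq geq fg gf fT gT intro: qadj_sym\<close>)
qed

lemma part4:
  assumes "ctx n F T p 4 f g"
  shows "has_cycle_in T 8 \<or> has_CL_trap n F"
proof -
  interpret ctx n F T p 4 f g by fact
  have u4: "{0..<4::nat} = {0,1,2,3}" by auto
  have "(\<exists>t\<in>set L4. cyc4 (\<lambda>i j. qadj (f i) (g j)) t) \<or> (\<exists>t\<in>set CL4. clp (\<lambda>i j. qadj (f i) (g j)) t)"
    by (rule comb4) (rule sr[unfolded u4]; assumption)
  then show ?thesis
  proof
    assume "\<exists>t\<in>set L4. cyc4 (\<lambda>i j. qadj (f i) (g j)) t"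
    then obtain t where t: "t \<in> set L4" "cyc4 (\<lambda>i j. qadj (f i) (g j)) t" by blast
    obtain a t1 where t1: "t = (a,t1)" by (cases t)
    obtain b c d w x y z where tt1: "t1 = (b,c,d,w,x,y,z)" by (cases t1)
    have pr: "a<4 \<and> b<4 \<and> c<4 \<and> d<4 \<and> w<4 \<and> x<4 \<and> y<4 \<and> z<4 \<and> distinct [a,b,c,d] \<and> distinct [w,x,y,z]"
      using L4_prop t(1) t1 tt1 by fastforce
    have cy: "qadj (f a) (g w) \<and> qadj (f b) (g w) \<and> qadj (f b) (g x) \<and> qadj (f c) (g x) \<and>
        qadj (f c) (g y) \<and> qadj (f d) (g y) \<and> qadj (f d) (g z) \<and> qadj (f a) (g z)"
      using t(2) t1 tt1 by simp
    have "has_cycle_in T 8"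
      by (rule cyc8_lemma[of "f a" "g w" "f b" "g x" "f c" "g y" "f d" "g z"])
        (use pr cy in \<open>auto simp: feq geq fg gf fT gT intro: qadj_sym\<close>)
    then show ?thesis by simp
  next
    assume "\<exists>t\<in>set CL4. clp (\<lambda>i j. qadj (f i) (g j)) t"
    then obtain t where t: "t \<in> set CL4" "clp (\<lambda>i j. qadj (f i) (g j)) t" by blast
    obtain j a b c where tt: "t = (j,a,b,c)" by (cases t)
    have pr: "j<4 \<and> a<4 \<and> b<4 \<and> c<4 \<and> distinct [a,b,c]"
      using CL4_prop t(1) tt by fastforce
    let ?r = "\<lambda>i j. qadj (f i) (g j)"
    have cl: "qadj (f a) (g j) \<and> qadj (f b) (g j) \<and> qadj (f c) (g j) \<and> deg2 ?r a \<and> deg2 ?r b \<and> deg2 ?r c"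
      using t(2) tt by simp
    have hd: "hdeg n F (f i) = 2" if i: "i < 4" "deg2 ?r i" for i
    proof -
      have "{y\<in>qverts n. {f i, y} \<in> qedges n - F} = {y\<in>T. parity y \<noteq> p \<and> qadj (f i) y}"
        by (rule hdeg_E[OF mf c ne sub fT[OF i(1)] fp[OF i(1)]])
      also have "\<dots> = g ` {j\<in>{0..<4}. qadj (f i) (g j)}"
      proof
        show "{y\<in>T. parity y \<noteq> p \<and> qadj (f i) y} \<subseteq> g ` {j\<in>{0..<4}. qadj (f i) (g j)}"
        proof
          fix y assume y: "y \<in> {y\<in>T. parity y \<noteq> p \<and> qadj (f i) y}"
          then have "y \<in> g ` {0..<4}" using gim by simp
          then obtain j' where "j' < 4" "y = g j'" by auto
          then show "y \<in> g ` {j\<in>{0..<4}. qadj (f i) (g j)}" using y by auto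
        qed
        show "g ` {j\<in>{0..<4}. qadj (f i) (g j)} \<subseteq> {y\<in>T. parity y \<noteq> p \<and> qadj (f i) y}"
          using gT gp by auto
      qed
      finally have "hdeg n F (f i) = card (g ` {j\<in>{0..<4}. qadj (f i) (g j)})" by (simp add: hdeg_def)
      also have "\<dots> = card {j\<in>{0..<4}. qadj (f i) (g j)}"
        by (rule card_image) (rule inj_on_subset[OF ginj], auto)
      also have "\<dots> = 2" using deg2_card[OF i(2)] by simp
      finally show ?thesis .
    qed
    have edge: "{g j, f i} \<in> qedges n - F" if i: "i < 4" "qadj (f i) (g j)" for i
    proof -
      have "{g j, f i} \<in> qedges n" using gq fq pr i by (simp add: qedges_iff qadj_sym)
      moreover have "{g j, f i} \<notin> F" using inside_healthy[OF mf c ne sub gT fT] pr i by simp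
      ultimately show ?thesis by simp
    qed
    have "has_CL_trap n F"
      unfolding has_CL_trap_def
      apply (rule exI[of _ "g j"], rule exI[of _ "f a"], rule exI[of _ "f b"], rule exI[of _ "f c"])
      using pr cl hd edge gq by (simp add: feq)
    then show ?thesis by simp
  qed
qed


theorem lemma5:
  fixes n :: nat and F :: "bool list set set" and T :: "bool list set"
  assumes "n \<ge> 3"
    and "minimal_faulty n F"
    and "disc_halfway n F T"
    and "\<forall>T'. T' \<subset> T \<longrightarrow> \<not> disc_halfway n F T'"
  shows "(card T = 4 \<longrightarrow> is_subcube n 2 T)
       \<and> (card T = 6 \<longrightarrow> has_cycle_in T 6)
       \<and> (card T = 8 \<longrightarrow> has_cycle_in T 8 \<or> has_CL_trap n F)"
proof -
  have "\<exists>p. cond n F p T \<and> p < 2" using assms(3) by (auto simp: disc_iff)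
  then obtain p where c: "cond n F p T" and p: "p < 2" by blast
  have ne: "T \<noteq> {}" and sub: "T \<subset> qverts n" using assms(3) by (auto simp: disc_iff)
  have fin: "finite T" using sub by (rule finite_T)
  have "{x\<in>T. parity x = p} \<union> {x\<in>T. parity x \<noteq> p} = T" "{x\<in>T. parity x = p} \<inter> {x\<in>T. parity x \<noteq> p} = {}"
    by auto
  then have sum: "card {x\<in>T. parity x = p} + card {x\<in>T. parity x \<noteq> p} = card T"
    using fin card_Un_disjoint[of "{x\<in>T. parity x = p}" "{x\<in>T. parity x \<noteq> p}"] by (metis finite_Un)
  have stp: "\<exists>f g. ctx n F T p k f g" if kk: "card T = 2*k" for k
  proof -
    have b: "card {x\<in>T. parity x = p} = card {x\<in>T. parity x \<noteq> p}"
      using balance[OF c sub p assms(4)] kk by simp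
    then have e: "card {x\<in>T. parity x = p} = k" and oc: "card {x\<in>T. parity x \<noteq> p} = k"
      using sum kk by auto
    obtain f where f: "bij_betw f {0..<k} {x\<in>T. parity x = p}"
      using finite_same_card_bij[of "{0..<k}" "{x\<in>T. parity x = p}"] e fin by auto
    obtain g where g: "bij_betw g {0..<k} {x\<in>T. parity x \<noteq> p}"
      using finite_same_card_bij[of "{0..<k}" "{x\<in>T. parity x \<noteq> p}"] oc fin by auto
    have "ctx n F T p k f g"
      unfolding ctx_def using assms(2,4) c ne sub p f g by blast
    then show ?thesis by blast
  qed
  show ?thesis
  proof (intro conjI impI)
    assume "card T = 4"
    then obtain f g where "ctx n F T p 2 f g" using stp[of 2] by auto
    then show "is_subcube n 2 T" by (rule part2)
  next
    assume "card T = 6"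
    then obtain f g where "ctx n F T p 3 f g" using stp[of 3] by auto
    then show "has_cycle_in T 6" by (rule part3)
  next
    assume "card T = 8"
    then obtain f g where "ctx n F T p 4 f g" using stp[of 4] by auto
    then show "has_cycle_in T 8 \<or> has_CL_trap n F" by (rule part4)
  qed
qed


end
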